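(* Fix $p\in(0,1)$ and let $D_n$ be the degree of the source of a random series-parallel network of size $n$ generated by the Bernoulli model with parameter $p$. For every $r\ge 1$ and $n\ge1$, $$\mathbb{E}\big(D_n^{\underline r}\big)=r!\sum_{j=0}^{r-1}\binom{r-1}{j}(-1)^{r-1-j}\binom{n+p(j+1)-1}{n-1},$$ where $D_n^{\underline r}=D_n(D_n-1)\cdots(D_n-r+1)$; consequently $\mathbb{E}(D_n^{\underline r})\sim \dfrac{r!\,n^{rp}}{\Gamma(rp+1)}$ as $n\to\infty$. Moreover, the probability generating function satisfies $$\sum_{n\ge1}\sum_{m}\mathbb{P}\{D_n=m\}z^{n-1}v^m=\frac{v}{v(1-z)+(1-v)(1-z)^{1-p}}.$$
   Context: Bernoulli model of series-parallel networks with parameter $p\in(0,1)$, $q=1-p$: at step $1$ the network is a single edge labelled $1$ from the source to the sink. At step $n>1$ one of the $n-1$ existing edges is chosen uniformly at random, say edge $j=(x,y)$; with probability $p$ a new parallel edge $(x,y)$ labelled $n$ is added, and with probability $q$ edge $(x,y)$ is replaced by edges $(x,z)$ labelled $j$ and $(z,y)$ labelled $n$, with $z$ a new vertex. The network after step $n$ has size $n$. The degree of the source is its out-degree. Binomial coefficients with real upper argument: $\binom{a}{k}=a(a-1)\cdots(a-k+1)/k!$. *)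

theory Defs
  imports "HOL-Probability.Probability"
begin

text \<open>A series-parallel network state: the list of edges (edge with label i+1 is
  the i-th list element, given as (tail, head)) and the next fresh vertex name.
  The source is vertex 0, the sink is vertex 1.\<close>
type_synonym spnet = "(nat \<times> nat) list \<times> nat"

definition sp_step :: "real \<Rightarrow> spnet \<Rightarrow> spnet pmf" where
  "sp_step p s = (case s of (es, w) \<Rightarrow>
     do { j \<leftarrow> pmf_of_set {..<length es};
          b \<leftarrow> bernoulli_pmf p;
          return_pmf (if b then (es @ [es ! j], w)
                      else (es[j := (fst (es ! j), w)] @ [(w, snd (es ! j))], Suc w)) })"

text \<open>Network after k steps beyond the first, i.e. of size k+1.\<close>
primrec sp_net_aux :: "real \<Rightarrow> nat \<Rightarrow> spnet pmf" where
  "sp_net_aux p 0 = return_pmf ([(0, 1)], 2)"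
| "sp_net_aux p (Suc k) = sp_net_aux p k \<bind> sp_step p"

text \<open>Random network of size n (meaningful for n \<ge> 1).\<close>
definition sp_net :: "real \<Rightarrow> nat \<Rightarrow> spnet pmf" where
  "sp_net p n = sp_net_aux p (n - 1)"

definition source_degree :: "spnet \<Rightarrow> nat" where
  "source_degree s = length (filter (\<lambda>e. fst e = 0) (fst s))"

definition D :: "real \<Rightarrow> nat \<Rightarrow> nat pmf" where
  "D p n = map_pmf source_degree (sp_net p n)"

definition falling :: "real \<Rightarrow> nat \<Rightarrow> real" where
  "falling x r = (\<Prod>i<r. x - real i)"

end

theory Submission
  imports Defs
begin

lemma sd_append: "source_degree (es @ [e], w) = source_degree (es, w) + (if fst e = 0 then 1 else 0)"
  by (simp add: source_degree_def)

lemma len_filter_update: "j < length xs \<Longrightarrow> P x = P (xs!j) \<Longrightarrow> length (filter P (xs[j:=x])) = length (filter P xs)"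
  by (induction xs arbitrary: j) (auto split: nat.splits)

lemma step_set: assumes "t \<in> set_pmf (sp_step p (es,w))" "es \<noteq> []"
  shows "length (fst t) = Suc (length es) \<and> snd t \<ge> w"
  using assms by (auto simp: sp_step_def set_pmf_of_set split: if_splits)

lemma step_finite: "es \<noteq> [] \<Longrightarrow> finite (set_pmf (sp_step p (es,w)))"
proof -
  assume "es \<noteq> []"
  then have "set_pmf (pmf_of_set {..<length es}) = {..<length es}" by (intro set_pmf_of_set) auto
  then show ?thesis unfolding sp_step_def by auto
qed

lemma aux_inv: "s \<in> set_pmf (sp_net_aux p k) \<Longrightarrow> length (fst s) = Suc k \<and> snd s \<ge> 2"
proof (induction k arbitrary: s)
  case 0 thus ?case by simp
next
  case (Suc k)
  then obtain s0 where s0: "s0 \<in> set_pmf (sp_net_aux p k)" "s \<in> set_pmf (sp_step p s0)" by auto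
  obtain es w where e: "s0 = (es,w)" by (cases s0)
  from Suc.IH[OF s0(1)] e have "length es = Suc k" "w \<ge> 2" by auto
  then have "es \<noteq> []" by auto
  with step_set[of s p es w] s0(2) e \<open>length es = Suc k\<close> \<open>w \<ge> 2\<close> show ?case by auto
qed

lemma aux_finite: "finite (set_pmf (sp_net_aux p k))"
proof (induction k)
  case 0 thus ?case by simp
next
  case (Suc k)
  have "\<And>s. s \<in> set_pmf (sp_net_aux p k) \<Longrightarrow> finite (set_pmf (sp_step p s))"
  proof -
    fix s assume "s \<in> set_pmf (sp_net_aux p k)"
    from aux_inv[OF this] show "finite (set_pmf (sp_step p s))"
      by (cases s) (auto intro!: step_finite)
  qed
  with Suc show ?case by (auto simp: set_bind_pmf)
qed

lemma step_exp:
  fixes f :: "nat \<Rightarrow> real"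
  assumes "length es = n" "n \<ge> 1" "w \<ge> 2" "0 \<le> p" "p \<le> 1"
  shows "measure_pmf.expectation (sp_step p (es,w)) (\<lambda>s. f (source_degree s)) =
         f (source_degree (es,w)) + p * real (source_degree (es,w)) / real n
           * (f (Suc (source_degree (es,w))) - f (source_degree (es,w)))"
proof -
  define d where "d = source_degree (es,w)"
  define h where "h = (\<lambda>j b. if b then (es @ [es ! j], w)
                      else (es[j := (fst (es ! j), w)] @ [(w, snd (es ! j))], Suc w))"
  have eq: "sp_step p (es,w) = pmf_of_set {..<n} \<bind> (\<lambda>j. map_pmf (h j) (bernoulli_pmf p))"
    unfolding sp_step_def h_def map_pmf_def using assms(1) by simp
  have ne: "{..<n} \<noteq> {}" using assms by (auto simp: lessThan_empty_iff)
  have fin: "\<And>j. finite (set_pmf (map_pmf (h j) (bernoulli_pmf p)))" by simp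
  have hT: "j < n \<Longrightarrow> source_degree (h j True) = d + (if fst (es!j) = 0 then 1 else 0)" for j
    by (simp add: h_def d_def sd_append)
  have hF: "j < n \<Longrightarrow> source_degree (h j False) = d" for j
    using assms unfolding h_def d_def source_degree_def
    by (simp add: len_filter_update)
  have fT: "j < n \<Longrightarrow> f (source_degree (h j True)) = f d + (if fst (es!j) = 0 then f (Suc d) - f d else 0)" for j
    using hT by simp
  have "measure_pmf.expectation (sp_step p (es,w)) (\<lambda>s. f (source_degree s)) =
     (\<Sum>j<n. pmf (pmf_of_set {..<n}) j *\<^sub>R measure_pmf.expectation (map_pmf (h j) (bernoulli_pmf p)) (\<lambda>s. f (source_degree s)))"
    unfolding eq by (rule pmf_expectation_bind) (use ne assms in \<open>auto simp: set_pmf_of_set lessThan_empty_iff\<close>)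
  also have "\<dots> = (\<Sum>j<n. (1 / real n) * (f d + p * (if fst (es!j) = 0 then f (Suc d) - f d else 0)))"
    using assms ne by (intro sum.cong refl) (auto simp: fT hF algebra_simps)
  also have "\<dots> = f d + p / real n * (f (Suc d) - f d) * real (card {j\<in>{..<n}. fst (es!j) = 0})"
  proof -
    have c: "(\<Sum>j<n. (if fst (es!j) = 0 then f (Suc d) - f d else 0)) = (f (Suc d) - f d) * real (card {j\<in>{..<n}. fst (es!j) = 0})"
      by (simp add: sum.inter_filter[symmetric])
    have "(\<Sum>j<n. (1 / real n) * (f d + p * (if fst (es!j) = 0 then f (Suc d) - f d else 0)))
        = (1 / real n) * (real n * f d + p * (\<Sum>j<n. (if fst (es!j) = 0 then f (Suc d) - f d else 0)))"
      by (simp add: sum_distrib_left[symmetric] sum.distrib sum_divide_distrib[symmetric] add_divide_distrib)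
    also have "\<dots> = f d + p / real n * (f (Suc d) - f d) * real (card {j\<in>{..<n}. fst (es!j) = 0})"
      unfolding c using assms by (simp add: field_simps)
    finally show ?thesis .
  qed
  also have "card {j\<in>{..<n}. fst (es!j) = 0} = d"
    unfolding d_def source_degree_def length_filter_conv_card using assms(1) by (simp add: conj_commute)
  finally show ?thesis unfolding d_def by simp
qed

lemma D_one: "D p (Suc 0) = return_pmf 1"
  by (simp add: D_def sp_net_def source_degree_def)

lemma D_step:
  fixes f :: "nat \<Rightarrow> real"
  assumes "0 \<le> p" "p \<le> 1" "n \<ge> 1"
  shows "measure_pmf.expectation (D p (Suc n)) f =
         measure_pmf.expectation (D p n) (\<lambda>d. f d + p * real d / real n * (f (Suc d) - f d))"
proof -
  obtain k where n: "n = Suc k" using assms(3) by (cases n) auto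
  define A where "A = set_pmf (sp_net_aux p k)"
  have finA: "finite A" unfolding A_def by (rule aux_finite)
  have "measure_pmf.expectation (D p (Suc n)) f
      = measure_pmf.expectation (sp_net_aux p k \<bind> sp_step p) (\<lambda>s. f (source_degree s))"
    by (simp add: D_def sp_net_def n)
  also have "\<dots> = (\<Sum>a\<in>A. pmf (sp_net_aux p k) a *\<^sub>R measure_pmf.expectation (sp_step p a) (\<lambda>s. f (source_degree s)))"
  proof (rule pmf_expectation_bind[OF finA])
    fix x assume "x \<in> A"
    from aux_inv[OF this[unfolded A_def]] show "finite (set_pmf (sp_step p x))"
      by (cases x) (auto intro!: step_finite)
  qed (simp add: A_def)
  also have "\<dots> = (\<Sum>a\<in>A. pmf (sp_net_aux p k) a * (f (source_degree a) + p * real (source_degree a) / real n * (f (Suc (source_degree a)) - f (source_degree a))))"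
  proof (intro sum.cong refl)
    fix a assume "a \<in> A"
    from aux_inv[OF this[unfolded A_def]] obtain es w where a: "a = (es,w)" "length es = n" "w \<ge> 2"
      by (cases a) (auto simp: n)
    show "pmf (sp_net_aux p k) a *\<^sub>R measure_pmf.expectation (sp_step p a) (\<lambda>s. f (source_degree s)) = 
      pmf (sp_net_aux p k) a * (f (source_degree a) + p * real (source_degree a) / real n * (f (Suc (source_degree a)) - f (source_degree a)))"
      unfolding a(1) using step_exp[OF a(2) assms(3) a(3) assms(1,2), of f] by simp
  qed
  also have "\<dots> = measure_pmf.expectation (D p n) (\<lambda>d. f d + p * real d / real n * (f (Suc d) - f d))"
    unfolding D_def sp_net_def integral_map_pmf
    by (subst integral_measure_pmf_real[OF finA]) (auto simp: A_def n mult.commute)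
  finally show ?thesis .
qed

definition Fm :: "real \<Rightarrow> nat \<Rightarrow> nat \<Rightarrow> real" where
  "Fm p r n = measure_pmf.expectation (D p n) (\<lambda>d. falling (real d) r)"

definition Bk :: "nat \<Rightarrow> real \<Rightarrow> real" where
  "Bk k a = ((real k + a) gchoose k)"

definition H :: "real \<Rightarrow> nat \<Rightarrow> nat \<Rightarrow> real" where
  "H p s k = (\<Sum>j\<le>s. real (s choose j) * (-1) ^ (s - j) * Bk k (p * real (j + 1)))"

lemma falling_Suc: "falling x (Suc r) = falling x r * (x - real r)"
  by (simp add: falling_def)

lemma falling_shift: "falling (x + 1) (Suc r) = (x + 1) * falling x r"
  unfolding falling_def prod.lessThan_Suc_shift by simp

lemma falling_0 [simp]: "falling x 0 = 1"
  by (simp add: falling_def)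

lemma falling_one: "falling 1 (Suc (Suc s)) = 0"
  unfolding falling_def by (rule prod_zero) (auto intro!: bexI[of _ 1])

lemma D_finite: "finite (set_pmf (D p n))"
  by (simp add: D_def sp_net_def aux_finite)

lemma F_rec:
  assumes "0 \<le> p" "p \<le> 1" "n \<ge> 1"
  shows "Fm p (Suc r) (Suc n) = (1 + p * real (Suc r) / real n) * Fm p (Suc r) n
            + p * real (Suc r) * real r / real n * Fm p r n"
proof -
  have pw: "falling (real d) (Suc r) + p * real d / real n * (falling (real (Suc d)) (Suc r) - falling (real d) (Suc r))
      = (1 + p * real (Suc r) / real n) * falling (real d) (Suc r) + (p * real (Suc r) * real r / real n) * falling (real d) r" for d
  proof -
    have a: "falling (real (Suc d)) (Suc r) = (real d + 1) * falling (real d) r"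
      using falling_shift[of "real d" r] by (simp add: add.commute)
    have b: "falling (real d) (Suc r) = falling (real d) r * (real d - real r)" by (rule falling_Suc)
    show ?thesis by (simp only: a b) (simp add: field_simps)
  qed
  have int: "integrable (measure_pmf (D p n)) g" for g :: "nat \<Rightarrow> real"
    by (rule integrable_measure_pmf_finite[OF D_finite])
  show ?thesis
    unfolding Fm_def D_step[OF assms] pw
    by (simp add: int)
qed

lemma Bk_0 [simp]: "Bk 0 a = 1" by (simp add: Bk_def)

lemma Bk_Suc: "Bk (Suc k) a = (1 + a / real (Suc k)) * Bk k a"
proof -
  have "real (Suc k) * ((real (Suc k) + a) gchoose Suc k) = (real (Suc k) + a) * ((real (Suc k) + a - 1) gchoose k)"
    by (rule gbinomial_absorption)
  moreover have "real (Suc k) + a - 1 = real k + a" by simp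
  ultimately show ?thesis unfolding Bk_def by (simp add: field_simps)
qed

lemma sign_lemma: "j \<le> Suc s \<Longrightarrow> (-1::real) ^ (Suc s - j) * (real j - real s - 1) = (-1) ^ (s - j) * (real (Suc s) - real j)"
proof (cases "j = Suc s")
  case False
  assume "j \<le> Suc s"
  with False have "Suc s - j = Suc (s - j)" by auto
  then show ?thesis by (simp add: algebra_simps)
qed simp

lemma aux_eq: "(X::real) * (1 + p * real (j+1) / K) = X * (1 + p * real (Suc (Suc s)) / K) + p / K * (X * (real j - real s - 1))"
  by (cases "K = 0") (simp_all add: field_simps)

lemma absorb_sum: "(\<Sum>k\<le>Suc s. real (Suc s choose k) * (real (Suc s) - real k) * u k) = real (Suc s) * (\<Sum>k\<le>s. real (s choose k) * u k)"
proof -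
  have "(\<Sum>k\<le>Suc s. real (Suc s choose k) * (real (Suc s) - real k) * u k) = (\<Sum>k\<le>s. real (Suc s choose k) * (real (Suc s) - real k) * u k)"
    by (simp only: sum.atMost_Suc) simp
  also have "\<dots> = (\<Sum>k\<le>s. real (Suc s) * (real (s choose k) * u k))"
  proof (intro sum.cong refl)
    fix k assume "k \<in> {..s}"
    then have 1: "real (Suc s) - real k = real (Suc s - k)" by auto
    have "(Suc s - k) * (Suc s choose k) = Suc s * (s choose k)"
      using binomial_absorb_comp[of "Suc s" k] by simp
    then have 2: "real (Suc s - k) * real (Suc s choose k) = real (Suc s) * real (s choose k)"
      by (simp only: of_nat_mult[symmetric])
    show "real (Suc s choose k) * (real (Suc s) - real k) * u k = real (Suc s) * (real (s choose k) * u k)"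
      unfolding 1 using 2 by (simp only: mult.assoc[symmetric]) (simp only: mult.commute[of "real (Suc s choose k)"])
  qed
  finally show ?thesis by (simp only: sum_distrib_left)
qed

lemma H0_Suc: "H p 0 (Suc k) = (1 + p / real (Suc k)) * H p 0 k"
  by (simp add: H_def Bk_Suc)

lemma H_Suc: "H p (Suc s) (Suc k) = (1 + p * real (Suc (Suc s)) / real (Suc k)) * H p (Suc s) k
                + p * real (Suc s) / real (Suc k) * H p s k"
proof -
  define b where "b j = Bk k (p * real (j + 1))" for j
  have "H p (Suc s) (Suc k) = (\<Sum>j\<le>Suc s. real (Suc s choose j) * (-1) ^ (Suc s - j) * b j * (1 + p * real (j+1) / real (Suc k)))"
    unfolding H_def Bk_Suc b_def by (simp add: mult_ac)
  also have "\<dots> = (\<Sum>j\<le>Suc s. real (Suc s choose j) * (-1) ^ (Suc s - j) * b j * (1 + p * real (Suc (Suc s)) / real (Suc k))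
       + p / real (Suc k) * (real (Suc s choose j) * (real (Suc s) - real j) * ((-1) ^ (s - j) * b j)))"
  proof (intro sum.cong refl)
    fix j assume "j \<in> {..Suc s}"
    then have sl: "(-1::real) ^ (Suc s - j) * (real j - real s - 1) = (-1) ^ (s - j) * (real (Suc s) - real j)"
      by (intro sign_lemma) auto
    have e: "real (Suc s choose j) * (-1) ^ (Suc s - j) * b j * (1 + p * real (j+1) / real (Suc k))
       = real (Suc s choose j) * (-1) ^ (Suc s - j) * b j * (1 + p * real (Suc (Suc s)) / real (Suc k))
         + p / real (Suc k) * real (Suc s choose j) * b j * ((-1::real) ^ (Suc s - j) * (real j - real s - 1))"
      using aux_eq[of "real (Suc s choose j) * (-1) ^ (Suc s - j) * b j" p j "real (Suc k)" s] by (simp add: mult_ac)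
    show "real (Suc s choose j) * (-1) ^ (Suc s - j) * b j * (1 + p * real (j+1) / real (Suc k))
       = real (Suc s choose j) * (-1) ^ (Suc s - j) * b j * (1 + p * real (Suc (Suc s)) / real (Suc k))
       + p / real (Suc k) * (real (Suc s choose j) * (real (Suc s) - real j) * ((-1) ^ (s - j) * b j))"
      using e unfolding sl by (simp add: mult_ac)
  qed
  also have "\<dots> = (\<Sum>j\<le>Suc s. real (Suc s choose j) * (-1) ^ (Suc s - j) * b j) * (1 + p * real (Suc (Suc s)) / real (Suc k))
      + p / real (Suc k) * (\<Sum>j\<le>Suc s. real (Suc s choose j) * (real (Suc s) - real j) * ((-1) ^ (s - j) * b j))"
    by (simp only: sum.distrib sum_distrib_right sum_distrib_left)
  also have "\<dots> = (1 + p * real (Suc (Suc s)) / real (Suc k)) * H p (Suc s) k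
      + p / real (Suc k) * (real (Suc s) * H p s k)"
    unfolding absorb_sum H_def b_def by (simp add: mult_ac)
  finally show ?thesis by simp
qed

lemma aux_eq2: "(F2::real) = S2 * F1 \<Longrightarrow> (1 + a) * (F2 * H1) + p * S2 * S1 / K * (F1 * H0) = F2 * ((1 + a) * H1 + p * S1 / K * H0)"
  by (cases "K = 0") (simp_all add: field_simps)

lemma F_closed:
  assumes "0 \<le> p" "p \<le> 1"
  shows "Fm p (Suc s) (Suc k) = fact (Suc s) * H p s k"
proof (induction k arbitrary: s)
  case 0
  have b: "(\<Sum>j\<le>s. real (s choose j) * (-1) ^ (s - j)) = (0::real) ^ s"
    using binomial_ring[of "1::real" "-1" s] by simp
  show ?case
  proof (cases s)
    case 0 thus ?thesis by (simp add: Fm_def D_one H_def falling_def)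
  next
    case (Suc s')
    then show ?thesis using b by (simp add: Fm_def D_one H_def falling_one del: fact_Suc)
  qed
next
  case (Suc k)
  have rec: "Fm p (Suc s) (Suc (Suc k)) = (1 + p * real (Suc s) / real (Suc k)) * Fm p (Suc s) (Suc k)
            + p * real (Suc s) * real s / real (Suc k) * Fm p s (Suc k)"
    by (rule F_rec) (use assms in auto)
  show ?case
  proof (cases s)
    case 0
    then show ?thesis using rec Suc.IH[of 0] by (simp add: H0_Suc)
  next
    case (Suc s')
    have f: "fact (Suc (Suc s')) = real (Suc (Suc s')) * (fact (Suc s') :: real)" by simp
    show ?thesis unfolding Suc rec[unfolded Suc] Suc.IH[of "Suc s'"] Suc.IH[of s'] H_Suc
      by (rule aux_eq2[OF f])
  qed
qed

definition Kc :: "nat \<Rightarrow> real \<Rightarrow> real" where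
  "Kc n a = ((real n - a) gchoose n)"

definition K :: "real \<Rightarrow> nat \<Rightarrow> nat \<Rightarrow> real" where
  "K p t n = (\<Sum>k\<le>t. real (t choose k) * (-1) ^ k * Kc n (p * real (k + 1)))"

lemma E_ind: "measure_pmf.expectation M (\<lambda>d. if d = m then c else 0) = c * pmf M m"
  by (subst integral_measure_pmf_real[of "{m}"]) (auto split: if_splits)

lemma pmf_rec:
  assumes "0 \<le> p" "p \<le> 1" "n \<ge> 1"
  shows "pmf (D p (Suc n)) m = (1 - p * real m / real n) * pmf (D p n) m
           + (if m = 0 then 0 else p * (real m - 1) / real n * pmf (D p n) (m - 1))"
proof -
  have int: "integrable (measure_pmf (D p n)) g" for g :: "nat \<Rightarrow> real"
    by (rule integrable_measure_pmf_finite[OF D_finite])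
  have "pmf (D p (Suc n)) m = measure_pmf.expectation (D p (Suc n)) (\<lambda>d. if d = m then 1 else 0)"
    using E_ind[of "D p (Suc n)" m 1] by simp
  also have "\<dots> = measure_pmf.expectation (D p n) (\<lambda>d. (if d = m then 1 else 0) + p * real d / real n *
      ((if Suc d = m then 1 else 0) - (if d = m then 1 else 0)))"
    by (rule D_step[OF assms])
  also have "\<dots> = (1 - p * real m / real n) * pmf (D p n) m
           + (if m = 0 then 0 else p * (real m - 1) / real n * pmf (D p n) (m - 1))"
  proof (cases m)
    case 0
    have "(\<lambda>d. (if d = m then 1 else 0) + p * real d / real n *
      ((if Suc d = m then 1 else 0) - (if d = m then 1 else 0))) = (\<lambda>d. if d = m then 1 else 0)"
      using 0 by (auto simp: fun_eq_iff)
    then show ?thesis using 0 E_ind[of "D p n" m 1] by simp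
  next
    case (Suc m')
    have "(\<lambda>d. (if d = m then 1 else 0) + p * real d / real n *
      ((if Suc d = m then 1 else 0) - (if d = m then 1 else 0))) =
      (\<lambda>d. (if d = m then 1 - p * real m / real n else 0) + (if d = m' then p * real m' / real n else 0))"
      using Suc by (auto simp: fun_eq_iff)
    then show ?thesis using Suc E_ind[of "D p n" m] E_ind[of "D p n" m'] by (simp add: int)
  qed
  finally show ?thesis .
qed

lemma pmf0: assumes "0 \<le> p" "p \<le> 1" shows "pmf (D p (Suc n)) 0 = 0"
proof (induction n)
  case 0 thus ?case by (simp add: D_one)
next
  case (Suc n) thus ?case using pmf_rec[OF assms, of "Suc n" 0] by simp
qed

lemma Kc_0 [simp]: "Kc 0 a = 1" by (simp add: Kc_def)

lemma Kc_Suc: "Kc (Suc n) a = (1 - a / real (Suc n)) * Kc n a"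
proof -
  have "real (Suc n) * ((real (Suc n) - a) gchoose Suc n) = (real (Suc n) - a) * ((real (Suc n) - a - 1) gchoose n)"
    by (rule gbinomial_absorption)
  moreover have "real (Suc n) - a - 1 = real n - a" by simp
  ultimately show ?thesis unfolding Kc_def by (simp add: field_simps)
qed

lemma K0_Suc: "K p 0 (Suc n) = (1 - p / real (Suc n)) * K p 0 n"
  by (simp add: K_def Kc_Suc)

lemma aux_eq3: "(X::real) * (1 - p * real (k+1) / N) = X * (1 - p * real (Suc (Suc t)) / N) + p / N * ((real (Suc t) - real k) * X)"
  by (cases "N = 0") (simp_all add: field_simps)

lemma K_Suc: "K p (Suc t) (Suc n) = (1 - p * real (Suc (Suc t)) / real (Suc n)) * K p (Suc t) n
                + p * real (Suc t) / real (Suc n) * K p t n"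
proof -
  define b where "b k = (-1) ^ k * Kc n (p * real (k + 1))" for k
  have "K p (Suc t) (Suc n) = (\<Sum>k\<le>Suc t. (real (Suc t choose k) * b k) * (1 - p * real (k+1) / real (Suc n)))"
    unfolding K_def Kc_Suc b_def by (simp add: mult_ac)
  also have "\<dots> = (\<Sum>k\<le>Suc t. (real (Suc t choose k) * b k) * (1 - p * real (Suc (Suc t)) / real (Suc n))
       + p / real (Suc n) * (real (Suc t choose k) * (real (Suc t) - real k) * b k))"
  proof (intro sum.cong refl)
    fix k
    show "(real (Suc t choose k) * b k) * (1 - p * real (k+1) / real (Suc n)) =
      (real (Suc t choose k) * b k) * (1 - p * real (Suc (Suc t)) / real (Suc n))
       + p / real (Suc n) * (real (Suc t choose k) * (real (Suc t) - real k) * b k)"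
      using aux_eq3[of "real (Suc t choose k) * b k" p k "real (Suc n)" t] by (simp add: mult_ac)
  qed
  also have "\<dots> = (\<Sum>k\<le>Suc t. real (Suc t choose k) * b k) * (1 - p * real (Suc (Suc t)) / real (Suc n))
      + p / real (Suc n) * (\<Sum>k\<le>Suc t. real (Suc t choose k) * (real (Suc t) - real k) * b k)"
    by (simp only: sum.distrib sum_distrib_right sum_distrib_left)
  also have "\<dots> = (1 - p * real (Suc (Suc t)) / real (Suc n)) * K p (Suc t) n
      + p / real (Suc n) * (real (Suc t) * K p t n)"
    unfolding absorb_sum K_def b_def by (simp add: mult_ac)
  finally show ?thesis by simp
qed

lemma pmf_closed:
  assumes "0 \<le> p" "p \<le> 1"
  shows "pmf (D p (Suc n)) (Suc t) = K p t n"
proof (induction n arbitrary: t)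
  case 0
  have b: "(\<Sum>k\<le>t. real (t choose k) * (-1) ^ k) = (0::real) ^ t"
    using binomial_ring[of "-1::real" 1 t] by simp
  show ?case using b by (cases t) (simp_all add: D_one K_def indicator_def)
next
  case (Suc n)
  have rec: "pmf (D p (Suc (Suc n))) (Suc t) = (1 - p * real (Suc t) / real (Suc n)) * pmf (D p (Suc n)) (Suc t)
           + p * real t / real (Suc n) * pmf (D p (Suc n)) t"
    using pmf_rec[OF assms, of "Suc n" "Suc t"] by simp
  show ?case
  proof (cases t)
    case 0
    then show ?thesis using rec Suc.IH[of 0] by (simp add: K0_Suc)
  next
    case (Suc t')
    show ?thesis unfolding Suc rec[unfolded Suc] Suc.IH[of "Suc t'"] Suc.IH[of t'] K_Suc by simp
  qed
qed

lemma Bk_asymp: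
  assumes "a > 0"
  shows "(\<lambda>k. Bk k a / real (Suc k) powr a) \<longlonglongrightarrow> 1 / Gamma (a + 1)"
proof -
  have G: "(\<lambda>k. Gamma_series' a (Suc k)) \<longlonglongrightarrow> Gamma a"
    by (rule LIMSEQ_Suc[OF Gamma_series'_LIMSEQ])
  have Gp: "Gamma a > 0" using Gamma_real_pos[OF assms] .
  have "(\<lambda>k. 1 / (a * Gamma_series' a (Suc k))) \<longlonglongrightarrow> 1 / (a * Gamma a)"
  proof -
    have ne: "a * Gamma a \<noteq> 0" by (metis Gp assms order_less_irrefl mult_eq_0_iff)
    show ?thesis by (rule tendsto_divide[OF tendsto_const tendsto_mult[OF tendsto_const G] ne])
  qed
  moreover have "Gamma (a + 1) = a * Gamma a"
    using assms by (intro Gamma_plus1) (auto elim!: nonpos_Ints_cases)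
  moreover have "1 / (a * Gamma_series' a (Suc k)) = Bk k a / real (Suc k) powr a" for k
  proof -
    have pr: "pochhammer a (Suc k) = a * pochhammer (a + 1) k" by (rule pochhammer_rec)
    have bk: "Bk k a = pochhammer (a + 1) k / fact k"
      unfolding Bk_def gbinomial_pochhammer' by (simp add: add_ac)
    have pw: "exp (a * ln (real (Suc k))) = real (Suc k) powr a"
      by (simp add: powr_def mult_ac)
    show ?thesis
      unfolding Gamma_series'_def bk pr using pw assms by (simp add: field_simps)
  qed
  ultimately show ?thesis by simp
qed

lemma part2:
  assumes "0 < p" "p \<le> 1"
  shows "(\<lambda>n. measure_pmf.expectation (D p n) (\<lambda>d. falling (real d) (Suc s)))
             \<sim>[at_top] (\<lambda>n. fact (Suc s) * real n powr (real (Suc s) * p) / Gamma (real (Suc s) * p + 1))"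
proof (rule asymp_equivI')
  define c where "c = real (Suc s) * p"
  define a where "a j = p * real (j + 1)" for j
  have cpos: "c > 0" using assms by (simp add: c_def)
  have Gc: "Gamma (c + 1) > 0" using cpos by simp
  have as: "a s = c" by (simp add: a_def c_def mult.commute)
  have lim_j: "(\<lambda>k. Bk k (a j) / real (Suc k) powr a j * real (Suc k) powr (a j - c))
      \<longlonglongrightarrow> (if j = s then 1 / Gamma (c + 1) else 0)" if "j \<le> s" for j
  proof (cases "j = s")
    case True
    have "(\<lambda>k. Bk k (a j) / real (Suc k) powr a j) \<longlonglongrightarrow> 1 / Gamma (a j + 1)"
      by (rule Bk_asymp) (use assms in \<open>simp add: a_def\<close>)
    then show ?thesis using True as by simp
  next
    case False
    with that have "j < s" by simp
    then have neg: "a j - c < 0" using assms unfolding a_def c_def by (simp add: algebra_simps)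
    have rs: "filterlim (\<lambda>k. real (Suc k)) at_top sequentially"
      by (rule filterlim_compose[OF filterlim_real_sequentially filterlim_Suc])
    have "(\<lambda>k. Bk k (a j) / real (Suc k) powr a j * real (Suc k) powr (a j - c)) \<longlonglongrightarrow> 1 / Gamma (a j + 1) * 0"
      by (intro tendsto_mult Bk_asymp tendsto_neg_powr[OF neg rs]) (use assms in \<open>simp add: a_def\<close>)
    then show ?thesis using False by simp
  qed
  have lim_sum: "(\<lambda>k. \<Sum>j\<le>s. real (s choose j) * (-1) ^ (s - j) * (Bk k (a j) / real (Suc k) powr a j * real (Suc k) powr (a j - c)))
      \<longlonglongrightarrow> (\<Sum>j\<le>s. real (s choose j) * (-1) ^ (s - j) * (if j = s then 1 / Gamma (c + 1) else 0))"
    by (intro tendsto_sum tendsto_mult_left lim_j) simp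
  have sval: "(\<Sum>j\<le>s. real (s choose j) * (-1) ^ (s - j) * (if j = s then 1 / Gamma (c + 1) else 0)) = 1 / Gamma (c + 1)"
    by (simp add: if_distrib[of "\<lambda>x. _ * x"] cong: if_cong)
  have lim2: "(\<lambda>k. Gamma (c + 1) * (\<Sum>j\<le>s. real (s choose j) * (-1) ^ (s - j) * (Bk k (a j) / real (Suc k) powr a j * real (Suc k) powr (a j - c))))
      \<longlonglongrightarrow> 1"
    using tendsto_mult_left[OF lim_sum, of "Gamma (c + 1)"] Gc unfolding sval by simp
  have eq: "measure_pmf.expectation (D p (Suc k)) (\<lambda>d. falling (real d) (Suc s)) /
      (fact (Suc s) * real (Suc k) powr c / Gamma (c + 1))
      = Gamma (c + 1) * (\<Sum>j\<le>s. real (s choose j) * (-1) ^ (s - j) * (Bk k (a j) / real (Suc k) powr a j * real (Suc k) powr (a j - c)))" for k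
  proof -
    have t: "Bk k (a j) / real (Suc k) powr a j * real (Suc k) powr (a j - c) = Bk k (a j) / real (Suc k) powr c" for j
      by (simp add: powr_diff)
    have "measure_pmf.expectation (D p (Suc k)) (\<lambda>d. falling (real d) (Suc s)) = fact (Suc s) * H p s k"
      using F_closed[of p s k] assms unfolding Fm_def by simp
    moreover have "(\<Sum>j\<le>s. real (s choose j) * (-1) ^ (s - j) * (Bk k (a j) / real (Suc k) powr c)) = H p s k / real (Suc k) powr c"
      unfolding H_def a_def sum_divide_distrib by (simp add: mult_ac)
    moreover have "real (Suc k) powr c > 0" by simp
    moreover have "(fact (Suc s) :: real) > 0" by (rule fact_gt_zero)
    ultimately show ?thesis unfolding t
      using Gc by (simp add: field_simps del: fact_Suc)
  qed
  show "((\<lambda>n. measure_pmf.expectation (D p n) (\<lambda>d. falling (real d) (Suc s)) /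
        (fact (Suc s) * real n powr (real (Suc s) * p) / Gamma (real (Suc s) * p + 1))) \<longlongrightarrow> 1) at_top"
    unfolding c_def[symmetric]
    by (rule LIMSEQ_imp_Suc) (unfold eq, rule lim2)
qed

lemma D_support: "set_pmf (D p (Suc n)) \<subseteq> {..Suc n}"
proof
  fix m assume "m \<in> set_pmf (D p (Suc n))"
  then obtain s where s: "s \<in> set_pmf (sp_net_aux p n)" "m = source_degree s"
    by (auto simp: D_def sp_net_def)
  have "length (fst s) = Suc n" using aux_inv[OF s(1)] by simp
  moreover have "source_degree s \<le> length (fst s)" unfolding source_degree_def by (rule length_filter_le)
  ultimately show "m \<in> {..Suc n}" using s by simp
qed

lemma pmf_zero_big: "m > Suc n \<Longrightarrow> pmf (D p (Suc n)) m = 0"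
  using D_support[of p n] by (auto simp: pmf_eq_0_set_pmf)

lemma coef_series:
  fixes z a :: real
  assumes "\<bar>z\<bar> < 1"
  shows "(\<lambda>n. Kc n a * z ^ n) sums ((1 - z) powr (a - 1))"
proof -
  have "(\<lambda>n. ((a - 1) gchoose n) * (-z) ^ n) sums (1 + -z) powr (a - 1)"
    by (rule gen_binomial_real) (use assms in simp)
  moreover have "((a - 1) gchoose n) * (-z) ^ n = Kc n a * z ^ n" for n
  proof -
    have "((a - 1) gchoose n) = (-1) ^ n * ((real n - (a - 1) - 1) gchoose n)"
      by (rule gbinomial_negated_upper)
    also have "real n - (a - 1) - 1 = real n - a" by simp
    finally have e: "((a - 1) gchoose n) = (-1) ^ n * Kc n a" unfolding Kc_def .
    have m: "(-z) ^ n = (-1) ^ n * z ^ n" by (rule power_minus)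
    have o: "(-1::real) ^ n * (-1) ^ n = 1"
    proof -
      have "(-1::real) ^ n * (-1) ^ n = ((-1) * (-1)) ^ n" by (rule power_mult_distrib[symmetric])
      then show ?thesis by simp
    qed
    have "((a - 1) gchoose n) * (-z) ^ n = ((-1) ^ n * (-1) ^ n) * (Kc n a * z ^ n)"
      unfolding e m by (simp only: mult_ac)
    then show ?thesis by (simp only: o mult_1_left)
  qed
  ultimately show ?thesis by simp
qed

lemma h_series:
  fixes z :: real
  assumes "\<bar>z\<bar> < 1"
  shows "(\<lambda>n. K p t n * z ^ n) sums ((1 - z) powr (p - 1) * (1 - (1 - z) powr p) ^ t)"
proof -
  define w where "w = 1 - z"
  have w: "w > 0" using assms by (simp add: w_def)
  have "(\<lambda>n. \<Sum>k\<le>t. real (t choose k) * (-1) ^ k * (Kc n (p * real (k + 1)) * z ^ n))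
      sums (\<Sum>k\<le>t. real (t choose k) * (-1) ^ k * (w powr (p * real (k + 1) - 1)))"
    unfolding w_def by (intro sums_sum sums_mult coef_series assms)
  moreover have "(\<lambda>n. \<Sum>k\<le>t. real (t choose k) * (-1) ^ k * (Kc n (p * real (k + 1)) * z ^ n)) = (\<lambda>n. K p t n * z ^ n)"
    unfolding K_def by (simp add: sum_distrib_left sum_distrib_right mult_ac)
  moreover have "(\<Sum>k\<le>t. real (t choose k) * (-1) ^ k * (w powr (p * real (k + 1) - 1))) = w powr (p - 1) * (1 - w powr p) ^ t"
  proof -
    have pk: "w powr (p * real (k + 1) - 1) = w powr (p - 1) * (w powr p) ^ k" for k
    proof -
      have pw: "(w powr p) ^ k = w powr (real k * p)" using w by (simp add: powr_power)
      have ex: "p * real (k + 1) - 1 = (p - 1) + real k * p" by (simp add: algebra_simps)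
      show ?thesis by (simp only: ex powr_add pw)
    qed
    have "(1 - w powr p) ^ t = (\<Sum>k\<le>t. real (t choose k) * (- (w powr p)) ^ k * 1 ^ (t - k))"
      using binomial_ring[of "- (w powr p)" 1 t] by simp
    then have "w powr (p - 1) * (1 - w powr p) ^ t = (\<Sum>k\<le>t. w powr (p - 1) * (real (t choose k) * (- (w powr p)) ^ k * 1 ^ (t - k)))"
      by (simp add: sum_distrib_left)
    also have "\<dots> = (\<Sum>k\<le>t. real (t choose k) * (-1) ^ k * (w powr (p - 1) * (w powr p) ^ k))"
      by (intro sum.cong refl) (simp add: power_minus[of "w powr p"] mult_ac)
    finally show ?thesis unfolding pk by simp
  qed
  ultimately show ?thesis unfolding w_def by simp
qed

lemma part3:
  fixes z v :: real
  assumes p: "0 < p" "p \<le> 1" and z: "\<bar>z\<bar> < 1" and v: "\<bar>v\<bar> \<le> 1"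
  shows "(\<lambda>n. \<Sum>m. pmf (D p (Suc n)) m * z ^ n * v ^ m) sums
             (v / (v * (1 - z) + (1 - v) * (1 - z) powr (1 - p)))"
proof -
  define w where "w = 1 - z"
  have w0: "w > 0" and w2: "w < 2" using z by (auto simp: w_def)
  define y where "y = w powr p"
  have y0: "y > 0" using w0 by (simp add: y_def)
  have y2: "y < 2"
  proof -
    have "y < 2 powr p" unfolding y_def using w0 w2 p by (intro powr_less_mono2) auto
    also have "2 powr p \<le> 2 powr 1" using p by (intro powr_mono) auto
    finally show ?thesis by simp
  qed
  define q where "q = 1 - y"
  have q1: "\<bar>q\<bar> < 1" using y0 y2 by (simp add: q_def)
  have vq: "\<bar>v * q\<bar> < 1"
  proof -
    have "\<bar>v * q\<bar> = \<bar>v\<bar> * \<bar>q\<bar>" by (simp add: abs_mult)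
    also have "\<dots> \<le> \<bar>q\<bar>" using v by (simp add: mult_left_le_one_le)
    finally show ?thesis using q1 by simp
  qed
  define f where "f n m = pmf (D p (Suc n)) m * z ^ n * v ^ m" for n m
  define b where "b n = (\<Sum>m\<le>Suc n. f n m)" for n
  have fz: "f n m = 0" if "m \<notin> {..Suc n}" for n m
    using that pmf_zero_big[of n m p] by (simp add: f_def)
  have fb: "suminf (f n) = b n" for n
    unfolding b_def by (rule suminf_finite) (use fz in auto)
  have vm: "\<bar>v ^ m\<bar> \<le> 1" for m using v by (simp add: power_abs power_le_one)
  have fabs: "\<bar>f n m\<bar> \<le> pmf (D p (Suc n)) m * \<bar>z\<bar> ^ n" for n m
  proof -
    have "\<bar>f n m\<bar> = pmf (D p (Suc n)) m * \<bar>z\<bar> ^ n * \<bar>v ^ m\<bar>"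
      by (simp add: f_def abs_mult power_abs)
    also have "\<dots> \<le> pmf (D p (Suc n)) m * \<bar>z\<bar> ^ n * 1"
      by (intro mult_left_mono vm) auto
    finally show ?thesis by simp
  qed
  have fabs1: "\<bar>f n m\<bar> \<le> \<bar>z\<bar> ^ n" for n m
  proof -
    have "pmf (D p (Suc n)) m * \<bar>z\<bar> ^ n \<le> 1 * \<bar>z\<bar> ^ n"
      by (intro mult_right_mono pmf_le_1) simp
    then show ?thesis using fabs[of n m] by simp
  qed
  have sumpmf: "(\<Sum>m\<le>Suc n. pmf (D p (Suc n)) m) = 1" for n
    by (rule sum_pmf_eq_1) (use D_support[of p n] in auto)
  have babs: "(\<Sum>m\<le>Suc n. \<bar>f n m\<bar>) \<le> \<bar>z\<bar> ^ n" for n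
  proof -
    have "(\<Sum>m\<le>Suc n. \<bar>f n m\<bar>) \<le> (\<Sum>m\<le>Suc n. pmf (D p (Suc n)) m * \<bar>z\<bar> ^ n)"
      by (intro sum_mono fabs)
    also have "\<dots> = (\<Sum>m\<le>Suc n. pmf (D p (Suc n)) m) * \<bar>z\<bar> ^ n" by (rule sum_distrib_right[symmetric])
    also have "\<dots> = \<bar>z\<bar> ^ n" unfolding sumpmf by simp
    finally show ?thesis .
  qed
  have bb: "\<bar>b n\<bar> \<le> \<bar>z\<bar> ^ n" for n
    unfolding b_def using babs[of n] sum_abs[of "f n" "{..Suc n}"] by linarith
  have inner_has: "(f n has_sum b n) UNIV" for n
    by (rule has_sum_finite_neutralI[of "{..Suc n}"]) (use fz in \<open>auto simp: b_def\<close>)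
  have geo: "summable (\<lambda>n. \<bar>z\<bar> ^ n)" using z by (intro summable_geometric) simp
  have geo_on: "(\<lambda>n. norm (\<bar>z\<bar> ^ n)) summable_on UNIV"
    by (rule norm_summable_imp_summable_on) (use geo in simp)
  have abs_f: "(\<lambda>x. norm ((\<lambda>(n, m). f n m) x)) summable_on UNIV \<times> UNIV"
  proof (rule Infinite_Sum.abs_summable_on_Sigma_iff[THEN iffD2], intro conjI ballI)
    fix n :: nat
    show "(\<lambda>m. norm ((\<lambda>(n, m). f n m) (n, m))) summable_on UNIV"
      by (rule finite_nonzero_values_imp_summable_on, rule finite_subset[of _ "{..Suc n}"]) (use fz in auto)
  next
    have e: "infsum (\<lambda>m. norm ((\<lambda>(n, m). f n m) (n, m))) UNIV = (\<Sum>m\<le>Suc n. \<bar>f n m\<bar>)" for n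
      by (rule infsumI, rule has_sum_finite_neutralI[of "{..Suc n}"]) (use fz in auto)
    show "(\<lambda>n. norm (infsum (\<lambda>m. norm ((\<lambda>(n, m). f n m) (n, m))) UNIV)) summable_on UNIV"
      unfolding e
      by (rule Infinite_Sum.abs_summable_on_comparison_test[OF geo_on]) (use babs in \<open>auto intro: order_trans\<close>)
  qed
  have sf: "(\<lambda>(n, m). f n m) summable_on UNIV \<times> UNIV"
    by (rule Infinite_Sum.abs_summable_summable[OF abs_f])
  have swap: "infsum (\<lambda>n. infsum (\<lambda>m. f n m) UNIV) UNIV = infsum (\<lambda>m. infsum (\<lambda>n. f n m) UNIV) UNIV"
    by (rule infsum_swap_banach[OF sf])
  have b_inf: "infsum (\<lambda>m. f n m) UNIV = b n" for n
    by (rule infsumI[OF inner_has])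
  have b_sum: "b summable_on UNIV"
    by (rule norm_summable_imp_summable_on, rule summable_comparison_test'[OF geo]) (use bb in auto)
  have b_sums: "b sums infsum b UNIV"
    by (rule has_sum_imp_sums) (use b_sum in simp)
  define h where "h t = w powr (p - 1) * (1 - w powr p) ^ t" for t
  define c where "c m = (if m = 0 then 0 else h (m - 1) * v ^ m)" for m
  have c_inf: "infsum (\<lambda>n. f n m) UNIV = c m" for m
  proof (cases m)
    case 0
    then have "f n m = 0" for n using pmf0[of p n] p by (simp add: f_def)
    then show ?thesis using 0 by (simp add: c_def)
  next
    case (Suc t)
    have fe: "f n m = v ^ m * (K p t n * z ^ n)" for n
      using pmf_closed[of p n t] p Suc by (simp add: f_def mult_ac)
    have "(\<lambda>n. f n m) sums (v ^ m * h t)"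
      unfolding fe h_def w_def by (intro sums_mult h_series z)
    moreover have "summable (\<lambda>n. norm (f n m))"
      by (rule summable_comparison_test'[OF geo]) (use fabs1 in auto)
    ultimately have "((\<lambda>n. f n m) has_sum (v ^ m * h t)) UNIV"
      by (intro norm_summable_imp_has_sum)
    then show ?thesis using Suc by (simp add: c_def infsumI mult.commute)
  qed
  define S where "S = w powr (p - 1) * v * (1 / (1 - v * q))"
  have cS: "(\<lambda>t. c (Suc t)) sums S"
  proof -
    have "(\<lambda>t. (w powr (p - 1) * v) * (v * q) ^ t) sums ((w powr (p - 1) * v) * (1 / (1 - v * q)))"
      by (intro sums_mult geometric_sums) (use vq in simp)
    moreover have "c (Suc t) = (w powr (p - 1) * v) * (v * q) ^ t" for t
      by (simp add: c_def h_def q_def y_def power_mult_distrib mult_ac)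
    ultimately show ?thesis by (simp add: S_def)
  qed
  have c_sums: "c sums S" using cS sums_Suc_iff[of c S] by (simp add: c_def)
  have c_norm: "summable (\<lambda>m. norm (c m))"
  proof -
    have "summable (\<lambda>t. \<bar>w powr (p - 1) * v\<bar> * \<bar>v * q\<bar> ^ t)"
      by (intro summable_mult summable_geometric) (use vq in simp)
    moreover have "norm (c (Suc t)) = \<bar>w powr (p - 1) * v\<bar> * \<bar>v * q\<bar> ^ t" for t
      by (simp add: c_def h_def q_def y_def power_mult_distrib abs_mult power_abs mult_ac)
    ultimately have "summable (\<lambda>t. norm (c (Suc t)))" by simp
    then show ?thesis by (subst summable_Suc_iff[symmetric])
  qed
  have c_val: "infsum c UNIV = S"
    by (rule infsumI, rule norm_summable_imp_has_sum[OF c_norm c_sums])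
  have bval: "infsum b UNIV = S"
  proof -
    have "infsum b UNIV = infsum (\<lambda>n. infsum (\<lambda>m. f n m) UNIV) UNIV" by (simp add: b_inf)
    also have "\<dots> = infsum c UNIV" unfolding swap c_inf ..
    finally show ?thesis using c_val by simp
  qed
  have Sval: "S = v / (v * (1 - z) + (1 - v) * (1 - z) powr (1 - p))"
  proof -
    define A where "A = w powr (1 - p)"
    have A0: "A > 0" using w0 by (simp add: A_def)
    have e1: "w powr (p - 1) = 1 / A"
      unfolding A_def using w0 by (simp add: powr_minus_divide[symmetric])
    have e2: "y = w / A"
    proof -
      have "y * A = w powr (p + (1 - p))" unfolding y_def A_def by (rule powr_add[symmetric])
      then have "y * A = w" using w0 by simp
      then show ?thesis using A0 by (simp add: field_simps)
    qed
    have ne: "1 - v * q \<noteq> 0" using vq by auto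
    have ne2: "A * (1 - v) + v * w \<noteq> 0"
    proof -
      have "A * (1 - v) + v * w = A * (1 - v * q)" unfolding q_def e2 using A0 by (simp add: field_simps)
      then show ?thesis using A0 ne by simp
    qed
    show ?thesis unfolding S_def e1 w_def[symmetric] A_def[symmetric] q_def e2
      using A0 ne2 ne unfolding q_def e2 by (simp add: field_simps)
  qed
  show ?thesis
    unfolding f_def[symmetric] fb using b_sums bval Sval by simp
qed

theorem mainTheorem2:
  fixes p :: real
  assumes "0 < p" and "p < 1"
  shows "(\<forall>r n. 1 \<le> r \<longrightarrow> 1 \<le> n \<longrightarrow>
           measure_pmf.expectation (D p n) (\<lambda>d. falling (real d) r) =
           fact r * (\<Sum>j\<le>r - 1. real ((r - 1) choose j) * (-1) ^ (r - 1 - j) *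
                       ((real n + p * real (j + 1) - 1) gchoose (n - 1))))
       \<and> (\<forall>r. 1 \<le> r \<longrightarrow>
           (\<lambda>n. measure_pmf.expectation (D p n) (\<lambda>d. falling (real d) r))
             \<sim>[at_top] (\<lambda>n. fact r * real n powr (real r * p) / Gamma (real r * p + 1)))
       \<and> (\<forall>z v :: real. \<bar>z\<bar> < 1 \<longrightarrow> \<bar>v\<bar> \<le> 1 \<longrightarrow>
           (\<lambda>n. \<Sum>m. pmf (D p (Suc n)) m * z ^ n * v ^ m) sums
             (v / (v * (1 - z) + (1 - v) * (1 - z) powr (1 - p))))"
proof (intro conjI allI impI)
  fix r n :: nat assume r: "1 \<le> r" and n: "1 \<le> n"
  obtain s where rs: "r = Suc s" using r by (cases r) auto
  obtain k where nk: "n = Suc k" using n by (cases n) auto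
  have "measure_pmf.expectation (D p n) (\<lambda>d. falling (real d) r) = fact (Suc s) * H p s k"
    using F_closed[of p s k] assms unfolding Fm_def rs nk by simp
  also have "H p s k = (\<Sum>j\<le>r - 1. real ((r - 1) choose j) * (-1) ^ (r - 1 - j) *
                       ((real n + p * real (j + 1) - 1) gchoose (n - 1)))"
    unfolding H_def rs nk diff_Suc_1 by (intro sum.cong refl) (simp add: Bk_def)
  finally show "measure_pmf.expectation (D p n) (\<lambda>d. falling (real d) r) =
           fact r * (\<Sum>j\<le>r - 1. real ((r - 1) choose j) * (-1) ^ (r - 1 - j) *
                       ((real n + p * real (j + 1) - 1) gchoose (n - 1)))"
    using rs by simp
next
  fix r :: nat assume r: "1 \<le> r"
  obtain s where rs: "r = Suc s" using r by (cases r) auto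
  show "(\<lambda>n. measure_pmf.expectation (D p n) (\<lambda>d. falling (real d) r))
             \<sim>[at_top] (\<lambda>n. fact r * real n powr (real r * p) / Gamma (real r * p + 1))"
    unfolding rs using part2[of p s] assms by simp
next
  fix z v :: real assume "\<bar>z\<bar> < 1" "\<bar>v\<bar> \<le> 1"
  then show "(\<lambda>n. \<Sum>m. pmf (D p (Suc n)) m * z ^ n * v ^ m) sums
             (v / (v * (1 - z) + (1 - v) * (1 - z) powr (1 - p)))"
    using part3[of p z v] assms by simp
qed

end
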